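(* Let $c>0$, $b>0$, $t_0\in\mathbb{R}$, $J=[t_0,+\infty)$, $f\in L^\infty(J)$, and let $g\in C^1(\mathbb{R})$ satisfy $g(0)=0$ and $g'(s)\ge b$ for all $s\in\mathbb{R}$. Let $u,v$ be two solutions on $J$ of $$w''(t)+c\,w'(t)+g(w(t))=f(t),$$ and set $$M=\max\Big\{\limsup_{t\to+\infty}|u(t)|,\ \limsup_{t\to+\infty}|v(t)|\Big\}<\infty,\qquad A=\sup_{s\in[-M,M]}\big(g'(s)-b\big).$$ If $$A<c\,\max\{c,\,2\sqrt b\},$$ then there exist constants $\delta>0$ and $K>0$ such that $$|u(t)-v(t)|+|u'(t)-v'(t)|\le K e^{-\delta t}\quad\text{for all } t\in J.$$
   Context: Solutions are understood as functions in $W^{2,\infty}_{\mathrm{loc}}(J)$ satisfying the equation almost everywhere. (Under the stated hypotheses all solutions are bounded on $J$, so $M$ is finite.) *)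

theory Defs
  imports "HOL-Analysis.Analysis"
begin

text \<open>A solution on J = [t0,+inf) of w'' + c w' + g(w) = f in the class W^{2,inf}_loc(J):
  w is differentiable on J with derivative w1, w1 is Lipschitz on every compact
  subinterval [t0,T] (i.e. w1 in W^{1,inf}_loc), and for almost every t in J,
  w1 is differentiable at t with w1'(t) = f t - c w1 t - g (w t).\<close>
definition is_solution ::
  "real \<Rightarrow> (real \<Rightarrow> real) \<Rightarrow> (real \<Rightarrow> real) \<Rightarrow> real \<Rightarrow> (real \<Rightarrow> real) \<Rightarrow> (real \<Rightarrow> real) \<Rightarrow> bool"
  where "is_solution c g f t0 w w1 \<longleftrightarrow>
    (\<forall>t\<ge>t0. (w has_real_derivative w1 t) (at t within {t0..})) \<and>
    (\<forall>T\<ge>t0. \<exists>L. L-lipschitz_on {t0..T} w1) \<and>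
    (AE t in lborel. t \<ge> t0 \<longrightarrow>
        (w1 has_real_derivative (f t - c * w1 t - g (w t))) (at t))"

definition Linf_on :: "real set \<Rightarrow> (real \<Rightarrow> real) \<Rightarrow> bool"
  where "Linf_on J f \<longleftrightarrow> f \<in> borel_measurable (restrict_space lborel J) \<and>
    (\<exists>B. AE t in lborel. t \<in> J \<longrightarrow> \<bar>f t\<bar> \<le> B)"

end

theory Submission
  imports Defs
begin


lemma deriv_lip:
  fixes f f' :: "real \<Rightarrow> real"
  assumes d: "\<And>x. x \<in> {a..b} \<Longrightarrow> (f has_real_derivative f' x) (at x within {a..b})"
    and bd: "\<And>x. x \<in> {a..b} \<Longrightarrow> \<bar>f' x\<bar> \<le> K" and K: "K \<ge> 0"
  shows "K-lipschitz_on {a..b} f"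
proof (rule lipschitz_onI)
  have *: "\<bar>f y - f x\<bar> \<le> K * \<bar>y - x\<bar>" if "x \<in> {a..b}" "y \<in> {a..b}" "x \<le> y" for x y
  proof -
    have "\<exists>z\<in>{x..y}. f y - f x = (\<lambda>h. f' z * h) (y - x)"
    proof (rule mvt_very_simple[OF \<open>x \<le> y\<close>])
      fix z assume "x \<le> z" "z \<le> y"
      then have "z \<in> {a..b}" using that by auto
      from DERIV_subset[OF d[OF this], of "{x..y}"] that
      show "(f has_derivative (\<lambda>h. f' z * h)) (at z within {x..y})"
        by (auto simp: has_field_derivative_def)
    qed
    then obtain z where z: "z \<in> {x..y}" "f y - f x = (y - x) * f' z" by auto
    have "z \<in> {a..b}" using z that by auto
    then have "\<bar>f' z\<bar> \<le> K" by (rule bd)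
    then show ?thesis using z \<open>x \<le> y\<close>
      by (simp add: abs_mult mult_right_mono mult.commute)
  qed
  fix x y assume "x \<in> {a..b}" "y \<in> {a..b}"
  then show "dist (f x) (f y) \<le> K * dist x y"
  proof (cases "x \<le> y")
    case True
    have "\<bar>f x - f y\<bar> = \<bar>f y - f x\<bar>" "\<bar>x - y\<bar> = \<bar>y - x\<bar>" by (simp_all add: abs_minus_commute)
    then show ?thesis using *[OF \<open>x \<in> _\<close> \<open>y \<in> _\<close> True] by (simp add: dist_real_def)
  next
    case False
    then show ?thesis using *[OF \<open>y \<in> _\<close> \<open>x \<in> _\<close>] by (simp add: dist_real_def)
  qed
qed (rule K)

lemma mvt_any:
  fixes F F' :: "real \<Rightarrow> real"
  assumes d: "\<And>s. (F has_real_derivative F' s) (at s)"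
  shows "\<exists>z. min x y \<le> z \<and> z \<le> max x y \<and> F x - F y = F' z * (x - y)"
proof (cases "x = y")
  case True then show ?thesis by auto
next
  case False
  have m: "\<exists>z. a < z \<and> z < b \<and> F b - F a = (b - a) * F' z" if "a < b" for a b
    using MVT2[OF that, of F F'] d by auto
  show ?thesis
  proof (cases "x < y")
    case True
    from m[OF True] obtain z where "x < z" "z < y" "F y - F x = (y - x) * F' z" by auto
    then show ?thesis by (intro exI[of _ z]) (auto simp: algebra_simps)
  next
    case False
    then have "y < x" using \<open>x \<noteq> y\<close> by auto
    from m[OF this] obtain z where "y < z" "z < x" "F x - F y = (x - y) * F' z" by auto
    then show ?thesis by (intro exI[of _ z]) (auto simp: algebra_simps)
  qed
qed

definition LIP :: "real \<Rightarrow> real \<Rightarrow> (real \<Rightarrow> real) \<Rightarrow> bool"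
  where "LIP a b f \<longleftrightarrow> (\<exists>L. L-lipschitz_on {a..b} f)"

lemma LIP_bounded:
  assumes "LIP a b f" shows "\<exists>B\<ge>0. \<forall>x\<in>{a..b}. \<bar>f x\<bar> \<le> B"
proof -
  obtain L where L: "L-lipschitz_on {a..b} f" using assms LIP_def by auto
  have "\<bar>f x\<bar> \<le> \<bar>f a\<bar> + L * (b - a)" if "x \<in> {a..b}" for x
  proof -
    have "a \<in> {a..b}" using that by auto
    from lipschitz_onD[OF L that this] have "\<bar>f x - f a\<bar> \<le> L * \<bar>x - a\<bar>" by (simp add: dist_real_def)
    moreover have "L * \<bar>x - a\<bar> \<le> L * (b - a)" using that lipschitz_on_nonneg[OF L]
      by (intro mult_left_mono) auto
    ultimately show ?thesis by linarith
  qed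
  then have "\<forall>x\<in>{a..b}. \<bar>f x\<bar> \<le> max 0 (\<bar>f a\<bar> + L * (b - a))" by force
  then show ?thesis by (intro exI[of _ "max 0 (\<bar>f a\<bar> + L * (b - a))"]) auto
qed

lemma LIP_const: "LIP a b (\<lambda>x. k)"
  unfolding LIP_def using lipschitz_on_constant by blast

lemma LIP_id: "LIP a b (\<lambda>x. x)"
  unfolding LIP_def using lipschitz_on_id by blast

lemma LIP_add: "LIP a b f \<Longrightarrow> LIP a b g \<Longrightarrow> LIP a b (\<lambda>x. f x + g x)"
  unfolding LIP_def using lipschitz_on_add by blast

lemma LIP_diff: "LIP a b f \<Longrightarrow> LIP a b g \<Longrightarrow> LIP a b (\<lambda>x. f x - g x)"
  unfolding LIP_def using lipschitz_on_diff by blast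

lemma LIP_mult:
  assumes "LIP a b f" "LIP a b g" shows "LIP a b (\<lambda>x. f x * g x)"
proof -
  obtain L1 where L1: "L1-lipschitz_on {a..b} f" using assms LIP_def by auto
  obtain L2 where L2: "L2-lipschitz_on {a..b} g" using assms LIP_def by auto
  obtain B1 where B1: "B1 \<ge> 0" "\<forall>x\<in>{a..b}. \<bar>f x\<bar> \<le> B1" using LIP_bounded[OF assms(1)] by auto
  obtain B2 where B2: "B2 \<ge> 0" "\<forall>x\<in>{a..b}. \<bar>g x\<bar> \<le> B2" using LIP_bounded[OF assms(2)] by auto
  have "(B1 * L2 + B2 * L1)-lipschitz_on {a..b} (\<lambda>x. f x * g x)"
  proof (rule lipschitz_onI)
    fix x y assume x: "x \<in> {a..b}" and y: "y \<in> {a..b}"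
    have e: "f x * g x - f y * g y = f x * (g x - g y) + g y * (f x - f y)" by (simp add: algebra_simps)
    have 1: "\<bar>f x * (g x - g y)\<bar> \<le> B1 * (L2 * \<bar>x - y\<bar>)"
      unfolding abs_mult using B1 x lipschitz_onD[OF L2 x y]
      by (intro mult_mono) (auto simp: dist_real_def)
    have 2: "\<bar>g y * (f x - f y)\<bar> \<le> B2 * (L1 * \<bar>x - y\<bar>)"
      unfolding abs_mult using B2 y lipschitz_onD[OF L1 x y]
      by (intro mult_mono) (auto simp: dist_real_def)
    show "dist (f x * g x) (f y * g y) \<le> (B1 * L2 + B2 * L1) * dist x y"
      unfolding dist_real_def e using 1 2 abs_triangle_ineq[of "f x * (g x - g y)" "g y * (f x - f y)"]
      by (simp add: algebra_simps)
  next
    show "0 \<le> B1 * L2 + B2 * L1"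
      using B1 B2 lipschitz_on_nonneg[OF L1] lipschitz_on_nonneg[OF L2] by simp
  qed
  then show ?thesis unfolding LIP_def by blast
qed



lemma LIP_compose:
  assumes f: "LIP a b f" and d: "\<And>s. (h has_real_derivative h' s) (at s)"
    and c: "continuous_on UNIV h'"
  shows "LIP a b (\<lambda>x. h (f x))"
proof -
  obtain L where L: "L-lipschitz_on {a..b} f" using f LIP_def by auto
  obtain B where B: "B \<ge> 0" "\<forall>x\<in>{a..b}. \<bar>f x\<bar> \<le> B" using LIP_bounded[OF f] by auto
  have "compact (h' ` {-B..B})"
    by (rule compact_continuous_image) (auto intro: continuous_on_subset[OF c])
  then obtain K where K: "\<forall>s\<in>{-B..B}. \<bar>h' s\<bar> \<le> K"
    using compact_imp_bounded[of "h' ` {-B..B}"] unfolding bounded_real by auto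
  have hK: "\<bar>h x - h y\<bar> \<le> max K 0 * \<bar>x - y\<bar>" if "x \<in> {-B..B}" "y \<in> {-B..B}" for x y
  proof -
    obtain z where z: "min x y \<le> z" "z \<le> max x y" "h x - h y = h' z * (x - y)"
      using mvt_any[OF d] by blast
    have "z \<in> {-B..B}" using z that by auto
    then have "\<bar>h' z\<bar> \<le> max K 0" using K by fastforce
    then show ?thesis unfolding z(3) abs_mult by (intro mult_right_mono) auto
  qed
  have "(max K 0 * L)-lipschitz_on {a..b} (\<lambda>x. h (f x))"
  proof (rule lipschitz_onI)
    fix x y assume x: "x \<in> {a..b}" and y: "y \<in> {a..b}"
    have "\<bar>h (f x) - h (f y)\<bar> \<le> max K 0 * \<bar>f x - f y\<bar>"
      using hK[of "f x" "f y"] B x y by force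
    also have "\<dots> \<le> max K 0 * (L * \<bar>x - y\<bar>)"
      using lipschitz_onD[OF L x y] by (intro mult_left_mono) (auto simp: dist_real_def)
    finally show "dist (h (f x)) (h (f y)) \<le> max K 0 * L * dist x y" by (simp add: dist_real_def)
  next
    show "0 \<le> max K 0 * L" using lipschitz_on_nonneg[OF L] by simp
  qed
  then show ?thesis unfolding LIP_def by blast
qed

lemma LIP_negl_image:
  assumes "LIP a b f" "negligible N"
  shows "negligible (f ` (N \<inter> {a..b}))"
proof -
  obtain L where L: "L-lipschitz_on {a..b} f" using assms LIP_def by auto
  show ?thesis
  proof (rule negligible_locally_Lipschitz_image)
    show "negligible (N \<inter> {a..b})" using assms(2) negligible_subset by blast
    fix x :: real assume x: "x \<in> N \<inter> {a..b}"
    show "\<exists>T B. open T \<and> x \<in> T \<and> (\<forall>y\<in>N \<inter> {a..b} \<inter> T. norm (f y - f x) \<le> B * norm (y - x))"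
      using lipschitz_onD[OF L] x
      by (intro exI[of _ UNIV] exI[of _ L]) (auto simp: dist_real_def)
  qed simp
qed

lemma barrier:
  fixes \<phi> :: "real \<Rightarrow> real"
  assumes ab: "a \<le> b" and cont: "continuous_on {a..b} \<phi>" and negl: "negligible (\<phi> ` S)"
    and der: "\<And>t. t \<in> {a..<b} \<Longrightarrow> t \<notin> S \<Longrightarrow> \<phi> t > L \<Longrightarrow>
               \<exists>D<0. (\<phi> has_real_derivative D) (at t)"
  shows "\<phi> b \<le> max (\<phi> a) L"
proof (rule ccontr)
  assume "\<not> ?thesis"
  then have gt: "\<phi> b > max (\<phi> a) L" by (simp add: not_le del: max_less_iff_conj)
  define m where "m = max (\<phi> a) L"
  have "\<not> negligible {m<..<\<phi> b}"
    using negligible_interval(2)[of m "\<phi> b"] gt by (auto simp: m_def)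
  then have "\<not> {m<..<\<phi> b} \<subseteq> \<phi> ` S" using negl negligible_subset by blast
  then obtain y where y: "m < y" "y < \<phi> b" "y \<notin> \<phi> ` S"
    by (meson greaterThanLessThan_iff subsetI)
  define Z where "Z = {t \<in> {a..b}. \<phi> t = y}"
  have Zc: "closed Z" unfolding Z_def by (rule continuous_closed_preimage_constant[OF cont]) simp
  have "\<exists>x\<ge>a. x \<le> b \<and> \<phi> x = y"
    by (rule IVT') (use y ab cont in \<open>auto simp: m_def\<close>)
  then have Zne: "Z \<noteq> {}" unfolding Z_def by auto
  have Zb: "bdd_above Z" unfolding Z_def by (auto intro: bdd_aboveI[of _ b])
  define t where "t = Sup Z"
  have tZ: "t \<in> Z" unfolding t_def by (rule closed_contains_Sup[OF Zne Zb Zc])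
  then have t: "a \<le> t" "t \<le> b" "\<phi> t = y" unfolding Z_def by auto
  have "t \<noteq> b" using t y by auto
  with t have tab: "t \<in> {a..<b}" by auto
  have tS: "t \<notin> S" using t y by auto
  have "\<phi> t > L" using t y by (auto simp: m_def)
  from der[OF tab tS this] obtain D where D: "D < 0" "(\<phi> has_real_derivative D) (at t)" by auto
  from DERIV_neg_dec_right[OF D(2) D(1)] obtain d where d: "d > 0" "\<And>h. h > 0 \<Longrightarrow> h < d \<Longrightarrow> \<phi> t > \<phi> (t + h)"
    by auto
  define h where "h = min (d/2) ((b - t)/2)"
  have h: "h > 0" "h < d" "t + h \<le> b" using d tab by (auto simp: h_def min_def field_simps)
  have "\<phi> (t + h) < y" using d(2)[OF h(1) h(2)] t by simp
  have "\<exists>x\<ge>t + h. x \<le> b \<and> \<phi> x = y"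
    by (rule IVT') (use \<open>\<phi> (t + h) < y\<close> y h cont t in \<open>auto intro: continuous_on_subset\<close>)
  then obtain s where s: "s \<ge> t + h" "s \<le> b" "\<phi> s = y" by auto
  then have "s \<in> Z" using t h unfolding Z_def by auto
  then have "s \<le> t" unfolding t_def by (rule cSup_upper[OF _ Zb])
  then show False using s h by auto
qed



lemma AE_negl:
  assumes "AE t in lborel. P t" shows "\<exists>N. negligible N \<and> (\<forall>t. t \<notin> N \<longrightarrow> P t)"
proof -
  obtain N where N0: "{x \<in> space lborel. \<not> P x} \<subseteq> N" "emeasure lborel N = 0" "N \<in> sets lborel"
    using AE_E[OF assms] by blast
  then have N: "{x \<in> space lborel. \<not> P x} \<subseteq> N" "N \<in> null_sets lborel" by (auto intro: null_setsI)
  have "negligible N" unfolding negligible_iff_null_sets using N(2) by (rule null_sets_completionI)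
  then show ?thesis using N(1) by auto
qed

lemma sol_der:
  assumes "is_solution c g f t0 u u'" "t > t0"
  shows "(u has_real_derivative u' t) (at t)"
proof -
  have "\<forall>t\<ge>t0. (u has_real_derivative u' t) (at t within {t0..})" using assms(1) unfolding is_solution_def by blast
  then have "(u has_real_derivative u' t) (at t within {t0..})" using assms(2) by simp
  moreover have "at t within {t0..} = at t" using assms(2) by (intro at_within_interior) auto
  ultimately show ?thesis by simp
qed

lemma sol_LIP1:
  assumes "is_solution c g f t0 u u'" shows "LIP t0 T u'"
proof (cases "T \<ge> t0")
  case True
  have "\<forall>T\<ge>t0. \<exists>L. L-lipschitz_on {t0..T} u'" using assms(1) unfolding is_solution_def by blast
  with True show ?thesis unfolding LIP_def by blast
next
  case False then have "{t0..T} = {}" by auto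
  then show ?thesis unfolding LIP_def by (metis lipschitz_on_empty_iff order_refl)
qed

lemma sol_LIP0:
  assumes "is_solution c g f t0 u u'" shows "LIP t0 T u"
proof -
  obtain K where K: "K \<ge> 0" "\<forall>x\<in>{t0..T}. \<bar>u' x\<bar> \<le> K" using LIP_bounded[OF sol_LIP1[OF assms]] by auto
  have "K-lipschitz_on {t0..T} u"
  proof (rule deriv_lip)
    fix x assume x: "x \<in> {t0..T}"
    have "\<forall>t\<ge>t0. (u has_real_derivative u' t) (at t within {t0..})" using assms(1) unfolding is_solution_def by blast
    then have "(u has_real_derivative u' x) (at x within {t0..})" using x by simp
    then show "(u has_real_derivative u' x) (at x within {t0..T})" by (rule DERIV_subset) auto
  qed (use K in auto)
  then show ?thesis unfolding LIP_def by blast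
qed

lemma antideriv:
  fixes g :: "real \<Rightarrow> real"
  assumes "continuous_on UNIV g"
  shows "((\<lambda>s. LBINT y=ereal 0..ereal s. g y) has_real_derivative g x) (at x)"
proof -
  have "((\<lambda>s. LBINT y=ereal 0..ereal s. g y) has_vector_derivative g x) (at x within {-\<bar>x\<bar>-1..\<bar>x\<bar>+1})"
    by (rule interval_integral_FTC2) (simp_all add: continuous_on_subset[OF assms])
  moreover have "at x within {-\<bar>x\<bar>-1..\<bar>x\<bar>+1} = at x" by (intro at_within_interior) auto
  ultimately show ?thesis by (simp add: has_real_derivative_iff_has_vector_derivative)
qed

lemma G0: "(LBINT y=ereal 0..ereal 0. (g::real\<Rightarrow>real) y) = 0" by simp



lemma energy_alg:
  fixes c b F p u gu fv :: real
  assumes c: "c > 0" and b: "b > 0" and F: "F \<ge> 0" and fv: "\<bar>fv\<bar> \<le> F"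
    and ug: "u * gu \<ge> b * u^2"
    and D: "- c * p^2 - c * u * gu + (2 * p + c * u) * fv \<ge> 0"
  shows "\<bar>p\<bar> \<le> 2 * (2 + c) * F / min c (c * b) \<and> \<bar>u\<bar> \<le> 2 * (2 + c) * F / min c (c * b)"
proof -
  define m where "m = min c (c * b)"
  have m: "m > 0" using c b by (simp add: m_def)
  define s where "s = \<bar>p\<bar> + \<bar>u\<bar>"
  have s0: "s \<ge> 0" by (simp add: s_def)
  have "c * u * gu \<ge> c * (b * u^2)" using ug c by (simp add: mult.assoc mult_left_mono)
  have "(2 * p + c * u) * fv \<le> (2 * \<bar>p\<bar> + c * \<bar>u\<bar>) * F"
  proof -
    have "(2 * p + c * u) * fv \<le> \<bar>2 * p + c * u\<bar> * \<bar>fv\<bar>" by (metis abs_ge_self abs_mult)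
    also have "\<dots> \<le> (2 * \<bar>p\<bar> + c * \<bar>u\<bar>) * F"
      using c fv by (intro mult_mono) (auto simp: abs_mult intro: order_trans[OF abs_triangle_ineq])
    finally show ?thesis .
  qed
  also have "\<dots> \<le> (2 + c) * F * s" unfolding s_def using c F
    by (simp add: algebra_simps mult_right_mono)
  finally have 1: "c * p^2 + c * (b * u^2) \<le> (2 + c) * F * s" using D \<open>c * u * gu \<ge> _\<close> by linarith
  have "m * p^2 \<le> c * p^2" by (simp add: m_def mult_right_mono)
  moreover have "m * u^2 \<le> c * b * u^2" by (simp add: m_def mult_right_mono)
  ultimately have 2: "m * (p^2 + u^2) \<le> (2 + c) * F * s" using 1 by (simp add: algebra_simps)
  have "s^2 \<le> 2 * (p^2 + u^2)" unfolding s_def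
  proof -
    have "0 \<le> (\<bar>p\<bar> - \<bar>u\<bar>)^2" by simp
    then show "(\<bar>p\<bar> + \<bar>u\<bar>)^2 \<le> 2 * (p^2 + u^2)"
      by (simp add: power2_eq_square algebra_simps)
  qed
  then have "m * s^2 \<le> 2 * (m * (p^2 + u^2))" using m by (simp add: mult_left_mono)
  also have "\<dots> \<le> 2 * ((2 + c) * F * s)" using 2 by simp
  finally have 3: "m * s * s \<le> (2 * (2 + c) * F) * s" by (simp add: power2_eq_square algebra_simps)
  have "s \<le> 2 * (2 + c) * F / m"
  proof (cases "s = 0")
    case True then show ?thesis using F m c by simp
  next
    case False
    then have "s > 0" using s0 by simp
    then have "m * s \<le> 2 * (2 + c) * F" using 3 by (simp add: mult_le_cancel_right)
    then show ?thesis using m by (simp add: field_simps)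
  qed
  then show ?thesis unfolding s_def m_def by auto
qed



lemma sol_bounded:
  fixes c b t0 :: real and f g g' u u' :: "real \<Rightarrow> real"
  assumes c: "c > 0" and b: "b > 0" and Lf: "Linf_on {t0..} f"
    and gd: "\<And>s. (g has_real_derivative g' s) (at s)" and g0: "g 0 = 0" and gb: "\<And>s. g' s \<ge> b"
    and sol: "is_solution c g f t0 u u'"
  shows "\<exists>B. \<forall>t\<ge>t0. \<bar>u t\<bar> \<le> B \<and> \<bar>u' t\<bar> \<le> B"
proof -
  obtain F0 where F0: "AE t in lborel. t \<in> {t0..} \<longrightarrow> \<bar>f t\<bar> \<le> F0"
    using Lf unfolding Linf_on_def by blast
  define F where "F = max F0 0"
  have F: "F \<ge> 0" by (simp add: F_def)
  have AEf: "AE t in lborel. t \<in> {t0..} \<longrightarrow> \<bar>f t\<bar> \<le> F"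
    using F0 by eventually_elim (auto simp: F_def)
  have AEu: "AE t in lborel. t \<ge> t0 \<longrightarrow> (u' has_real_derivative (f t - c * u' t - g (u t))) (at t)"
    using sol unfolding is_solution_def by blast
  have "AE t in lborel. (t \<in> {t0..} \<longrightarrow> \<bar>f t\<bar> \<le> F) \<and>
      (t \<ge> t0 \<longrightarrow> (u' has_real_derivative (f t - c * u' t - g (u t))) (at t))"
    using AEf AEu by eventually_elim blast
  then obtain N where N: "negligible N" and Nt: "\<And>t. t \<notin> N \<Longrightarrow> (t \<in> {t0..} \<longrightarrow> \<bar>f t\<bar> \<le> F) \<and>
      (t \<ge> t0 \<longrightarrow> (u' has_real_derivative (f t - c * u' t - g (u t))) (at t))"
    using AE_negl by blast
  have gc: "continuous_on UNIV g"
    by (intro continuous_at_imp_continuous_on ballI DERIV_isCont[OF gd])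
  define G where "G = (\<lambda>s. LBINT y=ereal 0..ereal s. g y)"
  have Gd: "\<And>s. (G has_real_derivative g s) (at s)" unfolding G_def by (rule antideriv[OF gc])
  have Gz: "G 0 = 0" unfolding G_def by (rule G0)
  have gk: "\<exists>k\<ge>b. g x = k * x" for x
  proof -
    obtain z where "g x - g 0 = g' z * (x - 0)" using mvt_any[OF gd, of x 0] by blast
    then show ?thesis using gb[of z] g0 by auto
  qed
  have ug: "x * g x \<ge> b * x^2" for x
  proof -
    obtain k where k: "k \<ge> b" "g x = k * x" using gk by blast
    then show ?thesis by (simp add: power2_eq_square mult_right_mono algebra_simps)
  qed
  have Gnn: "G s \<ge> 0" for s
  proof -
    obtain z where z: "min s 0 \<le> z" "z \<le> max s 0" "G s - G 0 = g z * (s - 0)" using mvt_any[OF Gd, of s 0] by blast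
    obtain k where k: "k \<ge> b" "g z = k * z" using gk by blast
    have "z * s \<ge> 0" using z by (cases "s \<ge> 0") (auto simp: mult_nonneg_nonneg mult_nonpos_nonpos)
    then have "k * (z * s) \<ge> 0" using k b by simp
    then show ?thesis using z k Gz by (simp add: algebra_simps)
  qed
  have Gc: "continuous_on UNIV G"
    by (intro continuous_at_imp_continuous_on ballI DERIV_isCont[OF Gd])
  define r0 where "r0 = 2 * (2 + c) * F / min c (c * b)"
  have r0: "r0 \<ge> 0" unfolding r0_def using c b F by simp
  have "compact (G ` {-r0..r0})"
    by (rule compact_continuous_image) (auto intro: continuous_on_subset[OF Gc])
  then obtain GM where GM: "\<forall>s\<in>{-r0..r0}. \<bar>G s\<bar> \<le> GM"
    using compact_imp_bounded[of "G ` {-r0..r0}"] unfolding bounded_real by auto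
  define L where "L = (1 + c + c^2/2) * r0^2 + 2 * GM"
  define V where "V = (\<lambda>x. u' x * u' x + c * u x * u' x + c^2/2 * (u x * u x) + 2 * G (u x))"
  have Vsmall: "V t \<le> L" if "\<bar>u' t\<bar> \<le> r0" "\<bar>u t\<bar> \<le> r0" for t
  proof -
    have "\<bar>u' t\<bar> * \<bar>u' t\<bar> \<le> r0 * r0" using that by (intro mult_mono) auto
    then have 1: "u' t * u' t \<le> r0 * r0" by simp
    have "\<bar>u t\<bar> * \<bar>u t\<bar> \<le> r0 * r0" using that by (intro mult_mono) auto
    then have 2: "u t * u t \<le> r0 * r0" by simp
    have "\<bar>u t * u' t\<bar> \<le> r0 * r0" unfolding abs_mult using that by (intro mult_mono) auto
    then have "u t * u' t \<le> r0 * r0" by linarith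
    then have "c * (u t * u' t) \<le> c * (r0 * r0)" using c by (intro mult_left_mono) auto
    then have 3: "c * u t * u' t \<le> c * (r0 * r0)" by (simp add: mult.assoc)
    have "u t \<in> {-r0..r0}" using that by auto
    then have "\<bar>G (u t)\<bar> \<le> GM" using GM by blast
    then have 4: "G (u t) \<le> GM" by linarith
    have 5: "c^2/2 * (u t * u t) \<le> c^2/2 * (r0 * r0)" using 2 by (intro mult_left_mono) auto
    show ?thesis unfolding V_def L_def using 1 3 4 5 by (simp add: power2_eq_square algebra_simps)
  qed
  have LIPV: "LIP t0 t1 V" for t1
    unfolding V_def
    by (intro LIP_add LIP_mult LIP_const sol_LIP0[OF sol] sol_LIP1[OF sol] LIP_compose[OF _ Gd gc])
  have main: "V t1 \<le> max (V t0) L" if t1: "t1 \<ge> t0" for t1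
  proof (rule barrier[where S = "(N \<union> {t0}) \<inter> {t0..t1}" and \<phi> = V and a = t0 and b = t1])
    show "continuous_on {t0..t1} V" using LIPV[of t1] unfolding LIP_def
      using lipschitz_on_continuous_on by blast
    show "negligible (V ` ((N \<union> {t0}) \<inter> {t0..t1}))"
      by (rule LIP_negl_image[OF LIPV]) (use N in simp)
    fix t assume t: "t \<in> {t0..<t1}" "t \<notin> (N \<union> {t0}) \<inter> {t0..t1}" "L < V t"
    then have tN: "t \<notin> N" and tt0: "t > t0" by auto
    have fb: "\<bar>f t\<bar> \<le> F" using Nt[OF tN] tt0 by auto
    have dp: "(u' has_real_derivative (f t - c * u' t - g (u t))) (at t)" using Nt[OF tN] tt0 by auto
    have du: "(u has_real_derivative u' t) (at t)" by (rule sol_der[OF sol tt0])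
    have dG: "((\<lambda>x. G (u x)) has_real_derivative g (u t) * u' t) (at t)" by (rule DERIV_chain2[OF Gd du])
    have dV: "(V has_real_derivative
       (- c * (u' t)^2 - c * u t * g (u t) + (2 * u' t + c * u t) * f t)) (at t)"
      unfolding V_def
      apply (rule derivative_eq_intros dp du dG refl)+
      apply (simp add: algebra_simps power2_eq_square)
      done
    have neg: "- c * (u' t)^2 - c * u t * g (u t) + (2 * u' t + c * u t) * f t < 0"
    proof (rule ccontr)
      assume "\<not> ?thesis"
      then have "- c * (u' t)^2 - c * u t * g (u t) + (2 * u' t + c * u t) * f t \<ge> 0" by simp
      from energy_alg[OF c b F fb ug this] have "\<bar>u' t\<bar> \<le> r0" "\<bar>u t\<bar> \<le> r0"
        unfolding r0_def by auto
      from Vsmall[OF this] t(3) show False by simp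
    qed
    show "\<exists>D<0. (V has_real_derivative D) (at t)" using neg dV by blast
  qed (use t1 in auto)
  define W where "W = max (V t0) L"
  have sq: "\<bar>x\<bar> \<le> 1 + x^2" for x :: real
  proof -
    have "0 \<le> (\<bar>x\<bar> - 1)^2" by simp
    then have "2 * \<bar>x\<bar> \<le> 1 + x^2" by (simp add: power2_eq_square algebra_simps)
    then show ?thesis by linarith
  qed
  have "\<bar>u t\<bar> \<le> 1 + 4 * W / c^2 \<and> \<bar>u' t\<bar> \<le> 2 + 2 * W" if "t \<ge> t0" for t
  proof -
    have VW: "V t \<le> W" using main[OF that] by (simp add: W_def)
    have e1: "V t = (u' t + c * u t / 2)^2 + (c * u t / 2)^2 + 2 * G (u t)"
      unfolding V_def by (simp add: power2_eq_square algebra_simps)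
    have s1: "0 \<le> (u' t + c * u t / 2)^2" "0 \<le> (c * u t / 2)^2" by simp_all
    have b1: "(c * u t / 2)^2 \<le> W" "(u' t + c * u t / 2)^2 \<le> W"
      using e1 VW Gnn[of "u t"] s1 by linarith+
    have "(c * u t / 2)^2 = c^2 * (u t)^2 / 4" by (simp add: power2_eq_square)
    then have "c^2 * (u t)^2 \<le> 4 * W" using b1 by simp
    then have a1: "(u t)^2 \<le> 4 * W / c^2" using c by (simp add: field_simps)
    have "\<bar>u' t\<bar> \<le> \<bar>u' t + c * u t / 2\<bar> + \<bar>c * u t / 2\<bar>" by linarith
    then have a2: "\<bar>u' t\<bar> \<le> 2 + 2 * W"
      using sq[of "u' t + c * u t / 2"] sq[of "c * u t / 2"] b1 by linarith
    show ?thesis using a1 a2 sq[of "u t"] by linarith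
  qed
  then have "\<forall>t\<ge>t0. \<bar>u t\<bar> \<le> max (1 + 4 * W / c^2) (2 + 2 * W) \<and> \<bar>u' t\<bar> \<le> max (1 + 4 * W / c^2) (2 + 2 * W)"
    by (simp add: le_max_iff_disj)
  then show ?thesis by (rule exI)
qed



lemma quad_nonneg:
  fixes a e d x y :: real
  assumes "a > 0" "e^2 \<le> 4 * a * d"
  shows "0 \<le> a * x^2 + e * x * y + d * y^2"
proof -
  have "4 * a * (a * x^2 + e * x * y + d * y^2) = (2 * a * x + e * y)^2 + (4 * a * d - e^2) * y^2"
    by (simp add: power2_eq_square algebra_simps)
  also have "\<dots> \<ge> 0" using assms by simp
  finally have "0 \<le> (4 * a) * (a * x^2 + e * x * y + d * y^2)" by simp
  then show ?thesis using assms(1) by (simp add: zero_le_mult_iff)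
qed

lemma convex_quad:
  fixes K0 c \<gamma> h h1 h2 :: real
  defines "E \<equiv> \<lambda>h. (K0 - 2 * h)^2 - 4 * (c - \<gamma>) * (c * h - \<gamma>)"
  assumes "h1 \<le> h" "h \<le> h2" "E h1 \<le> 0" "E h2 \<le> 0"
  shows "E h \<le> 0"
proof (cases "h1 = h2")
  case True then show ?thesis using assms by auto
next
  case False
  then have d: "h2 - h1 > 0" using assms by auto
  have id: "E h * (h2 - h1) = (h2 - h) * E h1 + (h - h1) * E h2 + 4 * (h - h1) * (h - h2) * (h2 - h1)"
    unfolding E_def by (simp add: power2_eq_square algebra_simps)
  have "(h2 - h) * E h1 \<le> 0" using assms by (simp add: mult_nonneg_nonpos)
  moreover have "(h - h1) * E h2 \<le> 0" using assms by (simp add: mult_nonneg_nonpos)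
  moreover have "(h - h1) * (h - h2) \<le> 0" using assms by (simp add: mult_nonneg_nonpos)
  then have X: "(h - h1) * (h - h2) * (h2 - h1) \<le> 0"
    using mult_nonpos_nonneg[of "(h - h1) * (h - h2)" "h2 - h1"] d by simp
  have "4 * (h - h1) * (h - h2) * (h2 - h1) = 4 * ((h - h1) * (h - h2) * (h2 - h1))" by (simp add: mult.assoc)
  then have "4 * (h - h1) * (h - h2) * (h2 - h1) \<le> 0" using X by linarith
  ultimately have "E h * (h2 - h1) \<le> 0" unfolding id by linarith
  then show ?thesis using d by (simp add: mult_le_0_iff)
qed

lemma quad_decay:
  fixes c b A1 :: real
  assumes c: "c > 0" and b: "b > 0" and A1: "0 \<le> A1" "A1 < c * max c (2 * sqrt b)"
  shows "\<exists>K0 \<gamma>. K0 > 0 \<and> \<gamma> > 0 \<and> (\<forall>p w h. b \<le> h \<longrightarrow> h \<le> b + A1 \<longrightarrow>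
            \<gamma> * (p^2 + w^2) \<le> c * p^2 - (K0 - 2 * h) * p * w + c * h * w^2)"
proof -
  have "\<exists>K0. K0 > 0 \<and> 4 * c^2 * b - (K0 - 2 * b)^2 > 0 \<and>
              4 * c^2 * (b + A1) - (K0 - 2 * (b + A1))^2 > 0"
  proof (cases "A1 < c * c")
    case True
    have "A1 * A1 \<le> c * c * A1" using True A1 by (simp add: mult_right_mono)
    have e: "(2 * b - 2 * (b + A1))^2 = 4 * (A1 * A1)" by (simp add: power2_eq_square algebra_simps)
    have "c^2 * b > 0" using c b by simp
    moreover have "c^2 * (b + A1) = c^2 * b + c * c * A1" by (simp add: power2_eq_square algebra_simps)
    ultimately have "4 * c^2 * (b + A1) - (2 * b - 2 * (b + A1))^2 > 0"
      using \<open>A1 * A1 \<le> c * c * A1\<close> unfolding e by linarith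
    then show ?thesis using b c by (intro exI[of _ "2 * b"]) auto
  next
    case False
    then have "A1 < c * (2 * sqrt b)" using A1 by (auto simp: max_def split: if_splits)
    then have "A1^2 < (c * (2 * sqrt b))^2" using A1 by (intro power_strict_mono) auto
    also have "\<dots> = 4 * c^2 * b" using b by (simp add: power_mult_distrib)
    finally have lt: "A1^2 < 4 * c^2 * b" .
    have "0 \<le> 4 * c^2 * A1" using A1 by simp
    moreover have "(2 * b + A1 - 2 * b)^2 = A1^2" "(2 * b + A1 - 2 * (b + A1))^2 = A1^2"
      by (simp_all add: power2_eq_square algebra_simps)
    moreover have "4 * c^2 * (b + A1) = 4 * c^2 * b + 4 * c^2 * A1" by (simp add: algebra_simps)
    ultimately have "4 * c^2 * b - (2 * b + A1 - 2 * b)^2 > 0"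
      "4 * c^2 * (b + A1) - (2 * b + A1 - 2 * (b + A1))^2 > 0" using lt by linarith+
    then show ?thesis using b A1 by (intro exI[of _ "2 * b + A1"]) auto
  qed
  then obtain K0 where K0: "K0 > 0" and e1: "4 * c^2 * b - (K0 - 2 * b)^2 > 0"
    and e2: "4 * c^2 * (b + A1) - (K0 - 2 * (b + A1))^2 > 0" by blast
  define e1v where "e1v = 4 * c^2 * b - (K0 - 2 * b)^2"
  define e2v where "e2v = 4 * c^2 * (b + A1) - (K0 - 2 * (b + A1))^2"
  define \<gamma> where "\<gamma> = min (c/2) (min (e1v / (8 * c * (1 + b))) (e2v / (8 * c * (1 + (b + A1)))))"
  have \<gamma>: "\<gamma> > 0" using c b A1 e1 e2 by (simp add: \<gamma>_def e1v_def e2v_def)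
  have \<gamma>c: "\<gamma> \<le> c/2" by (simp add: \<gamma>_def)
  define E where "E \<equiv> \<lambda>h. (K0 - 2 * h)^2 - 4 * (c - \<gamma>) * (c * h - \<gamma>)"
  have endp: "E h \<le> 0" if "h > 0" "4 * c^2 * h - (K0 - 2 * h)^2 = ev" "\<gamma> \<le> ev / (8 * c * (1 + h))" for h ev
  proof -
    have pos: "8 * c * (1 + h) > 0" using c that by simp
    have "\<gamma> * (8 * c * (1 + h)) \<le> ev" using that(3) pos by (simp add: field_simps)
    moreover have "\<gamma> * (8 * c * (1 + h)) = 2 * (4 * \<gamma> * c * (1 + h))" by (simp add: algebra_simps)
    ultimately have 1: "2 * (4 * \<gamma> * c * (1 + h)) \<le> ev" by simp
    have "0 < \<gamma> * (8 * c * (1 + h))" using \<gamma> pos by simp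
    have 2: "E h = (K0 - 2 * h)^2 - 4 * c^2 * h + 4 * \<gamma> * c * (1 + h) - 4 * \<gamma>^2"
      unfolding E_def by (simp add: power2_eq_square algebra_simps)
    have "0 \<le> \<gamma>^2" by simp
    then show ?thesis using 1 2 that(2) \<open>0 < \<gamma> * (8 * c * (1 + h))\<close>
      \<open>\<gamma> * (8 * c * (1 + h)) = 2 * (4 * \<gamma> * c * (1 + h))\<close> by linarith
  qed
  have g1: "\<gamma> \<le> e1v / (8 * c * (1 + b))" unfolding \<gamma>_def by linarith
  have g2: "\<gamma> \<le> e2v / (8 * c * (1 + (b + A1)))" unfolding \<gamma>_def by linarith
  have E1: "E b \<le> 0" by (rule endp[OF b _ g1]) (simp add: e1v_def)
  have E2: "E (b + A1) \<le> 0" by (rule endp[OF _ _ g2]) (use b A1 in \<open>simp_all add: e2v_def\<close>)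
  have "\<gamma> * (p^2 + w^2) \<le> c * p^2 - (K0 - 2 * h) * p * w + c * h * w^2"
    if h: "b \<le> h" "h \<le> b + A1" for p w h
  proof -
    have "E h \<le> 0" using convex_quad[of b h "b + A1" K0 c \<gamma>] h E1 E2 unfolding E_def by blast
    then have "(K0 - 2 * h)^2 \<le> 4 * (c - \<gamma>) * (c * h - \<gamma>)" unfolding E_def by linarith
    then have "(- (K0 - 2 * h))^2 \<le> 4 * (c - \<gamma>) * (c * h - \<gamma>)" by (simp only: power2_minus)
    from quad_nonneg[OF _ this, of p w] \<gamma>c c
    have "0 \<le> (c - \<gamma>) * p^2 + - (K0 - 2 * h) * p * w + (c * h - \<gamma>) * w^2" by simp
    then show ?thesis by (simp add: algebra_simps)
  qed
  then show ?thesis using K0 \<gamma> by blast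
qed

lemma Q_bounds:
  fixes c K0 :: real
  assumes c: "c > 0" and K0: "K0 > 0"
  defines "\<beta> \<equiv> (K0 + c^2) / 2"
  defines "q0 \<equiv> min (1/2) ((\<beta> - c^2/4) / (1 + \<beta>))"
  shows "q0 > 0" "q0 * (p^2 + w^2) \<le> p^2 + c * p * w + \<beta> * w^2"
    "p^2 + c * p * w + \<beta> * w^2 \<le> (1 + c + \<beta>) * (p^2 + w^2)"
proof -
  have "\<beta> - c^2/4 = K0/2 + c^2/4" by (simp add: \<beta>_def field_simps)
  moreover have "K0/2 + c^2/4 > 0" using K0 by (simp add: add_pos_nonneg)
  ultimately have b1: "\<beta> - c^2/4 > 0" by simp
  have b2: "1 + \<beta> > 0" using c K0 by (simp add: \<beta>_def add_pos_nonneg)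
  show q0: "q0 > 0" using b1 b2 by (simp add: q0_def)
  have q1: "q0 \<le> 1/2" unfolding q0_def by (rule min.cobounded1)
  have "q0 \<le> (\<beta> - c^2/4) / (1 + \<beta>)" unfolding q0_def by (rule min.cobounded2)
  then have "q0 * (1 + \<beta>) \<le> \<beta> - c^2/4" using b2 by (simp add: field_simps)
  moreover have "4 * (1 - q0) * (\<beta> - q0) = 4 * \<beta> - 4 * (q0 * (1 + \<beta>)) + 4 * q0^2"
    by (simp add: algebra_simps power2_eq_square)
  moreover have "0 \<le> q0^2" by simp
  ultimately have "c^2 \<le> 4 * (1 - q0) * (\<beta> - q0)" by linarith
  from quad_nonneg[OF _ this, of p w] q1
  have "0 \<le> (1 - q0) * p^2 + c * p * w + (\<beta> - q0) * w^2" by simp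
  then show "q0 * (p^2 + w^2) \<le> p^2 + c * p * w + \<beta> * w^2" by (simp add: algebra_simps)
  have "0 \<le> (p - w)^2" "0 \<le> (p + w)^2" by simp_all
  moreover have "(p - w)^2 = p^2 + w^2 - 2 * (p * w)" "(p + w)^2 = p^2 + w^2 + 2 * (p * w)"
    by (simp_all add: power2_eq_square algebra_simps)
  ultimately have "p * w \<le> p^2 + w^2" using zero_le_power2[of p] zero_le_power2[of w] by linarith
  then have "c * (p * w) \<le> c * (p^2 + w^2)" using c by (intro mult_left_mono) auto
  then have "c * p * w \<le> c * (p^2 + w^2)" by (simp add: mult.assoc)
  have "\<beta> \<ge> 0" using b1 zero_le_power2[of c] by linarith
  moreover have "p^2 \<le> p^2 + w^2" "\<beta> * w^2 \<le> \<beta> * (p^2 + w^2)" using \<open>\<beta> \<ge> 0\<close>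
    by (auto intro!: mult_left_mono)
  moreover have "(1 + c + \<beta>) * (p^2 + w^2) = (p^2 + w^2) + c * (p^2 + w^2) + \<beta> * (p^2 + w^2)"
    by (simp add: algebra_simps)
  moreover have "0 \<le> w^2" by simp
  ultimately show "p^2 + c * p * w + \<beta> * w^2 \<le> (1 + c + \<beta>) * (p^2 + w^2)"
    using \<open>c * p * w \<le> c * (p^2 + w^2)\<close> by linarith
qed



lemma LIP_mono: "LIP a b f \<Longrightarrow> a \<le> a' \<Longrightarrow> LIP a' b f"
  unfolding LIP_def by (meson atLeastatMost_subset_iff lipschitz_on_subset order_refl)

lemma limsup_fin:
  fixes u :: "real \<Rightarrow> real"
  assumes "\<forall>t\<ge>t0. \<bar>u t\<bar> \<le> B"
  shows "\<exists>x\<ge>0. Limsup at_top (\<lambda>t. ereal \<bar>u t\<bar>) = ereal x"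
proof -
  have "eventually (\<lambda>t. ereal \<bar>u t\<bar> \<le> ereal B) at_top"
    using assms unfolding eventually_at_top_linorder by auto
  then have 1: "Limsup at_top (\<lambda>t. ereal \<bar>u t\<bar>) \<le> ereal B" by (rule Limsup_bounded)
  have 2: "0 \<le> Limsup at_top (\<lambda>t. ereal \<bar>u t\<bar>)"
    by (rule le_Limsup) auto
  show ?thesis using 1 2 by (cases "Limsup at_top (\<lambda>t. ereal \<bar>u t\<bar>)") auto
qed

lemma limsup_ev:
  fixes u :: "real \<Rightarrow> real"
  assumes "Limsup at_top (\<lambda>t. ereal \<bar>u t\<bar>) = ereal x" "x \<le> M" "e > 0"
  shows "\<exists>T. \<forall>t\<ge>T. \<bar>u t\<bar> < M + e"
proof -
  have "Limsup at_top (\<lambda>t. ereal \<bar>u t\<bar>) < ereal (M + e)" using assms by simp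
  from Limsup_lessD[OF this] have "eventually (\<lambda>t. ereal \<bar>u t\<bar> < ereal (M + e)) at_top" .
  then show ?thesis unfolding eventually_at_top_linorder by auto
qed



theorem theorem3p1:
  fixes c b t0 :: real and f g g' u u' v v' :: "real \<Rightarrow> real"
  assumes "c > 0" "b > 0"
    and "Linf_on {t0..} f"
    and "\<And>s. (g has_real_derivative g' s) (at s)" "continuous_on UNIV g'"
    and "g 0 = 0" "\<And>s. g' s \<ge> b"
    and "is_solution c g f t0 u u'" "is_solution c g f t0 v v'"
    and "M = real_of_ereal (max (Limsup at_top (\<lambda>t. ereal \<bar>u t\<bar>))
                                (Limsup at_top (\<lambda>t. ereal \<bar>v t\<bar>)))"
    and "A = (SUP s\<in>{-M..M}. g' s - b)"
    and "A < c * max c (2 * sqrt b)"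
  shows "\<exists>\<delta>>0. \<exists>K>0. \<forall>t\<ge>t0. \<bar>u t - v t\<bar> + \<bar>u' t - v' t\<bar> \<le> K * exp (- \<delta> * t)"
proof -
  note c = assms(1) and b = assms(2) and gd = assms(4) and g'c = assms(5) and gb = assms(7)
    and solu = assms(8) and solv = assms(9) and Mdef = assms(10) and Adef = assms(11) and Alt = assms(12)
  obtain Bu where Bu: "\<forall>t\<ge>t0. \<bar>u t\<bar> \<le> Bu \<and> \<bar>u' t\<bar> \<le> Bu"
    using sol_bounded[OF c b assms(3) gd assms(6) gb solu] by blast
  obtain Bv where Bv: "\<forall>t\<ge>t0. \<bar>v t\<bar> \<le> Bv \<and> \<bar>v' t\<bar> \<le> Bv"
    using sol_bounded[OF c b assms(3) gd assms(6) gb solv] by blast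
  obtain xu where xu: "xu \<ge> 0" "Limsup at_top (\<lambda>t. ereal \<bar>u t\<bar>) = ereal xu"
    using limsup_fin[of t0 u Bu] Bu by auto
  obtain xv where xv: "xv \<ge> 0" "Limsup at_top (\<lambda>t. ereal \<bar>v t\<bar>) = ereal xv"
    using limsup_fin[of t0 v Bv] Bv by auto
  have M: "M = max xu xv" unfolding Mdef xu xv by (simp add: max_def)
  have M0: "M \<ge> 0" using M xu by simp
  have "compact ((\<lambda>s. g' s - b) ` {-M..M})"
    by (rule compact_continuous_image) (auto intro!: continuous_intros continuous_on_subset[OF g'c])
  then have bdd: "bdd_above ((\<lambda>s. g' s - b) ` {-M..M})"
    by (intro bounded_imp_bdd_above compact_imp_bounded)
  have Ale: "g' s - b \<le> A" if "s \<in> {-M..M}" for s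
    unfolding Adef using bdd that by (rule cSUP_upper2) auto
  have A0: "A \<ge> 0" using Ale[of 0] gb[of 0] M0 by auto
  define A1 where "A1 = (A + c * max c (2 * sqrt b)) / 2"
  have A1: "A < A1" "A1 < c * max c (2 * sqrt b)" "0 \<le> A1" using Alt A0 by (auto simp: A1_def)
  have opn: "open {s. g' s < b + A1}"
    by (rule open_Collect_less[OF g'c]) (intro continuous_intros)
  have sub: "{-M..M} \<subseteq> {s. g' s < b + A1}" using Ale A1 by force
  obtain e where e: "e > 0" "(\<Union>x\<in>{-M..M}. cball x e) \<subseteq> {s. g' s < b + A1}"
    using compact_subset_open_imp_cball_epsilon_subset[OF compact_Icc opn sub] by blast
  have g'bnd: "g' s < b + A1" if "\<bar>s\<bar> \<le> M + e" for s
  proof -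
    define x where "x = max (-M) (min M s)"
    have "x \<in> {-M..M}" using M0 by (auto simp: x_def)
    moreover have "s \<in> cball x e" using that e(1) M0 by (auto simp: x_def dist_real_def)
    ultimately show ?thesis using e(2) by blast
  qed
  obtain T1 where T1: "\<forall>t\<ge>T1. \<bar>u t\<bar> < M + e" using limsup_ev[OF xu(2) _ e(1), of M] M by auto
  obtain T2 where T2: "\<forall>t\<ge>T2. \<bar>v t\<bar> < M + e" using limsup_ev[OF xv(2) _ e(1), of M] M by auto
  define T where "T = max t0 (max T1 T2)"
  have T: "T \<ge> t0" by (simp add: T_def)
  have hb: "\<exists>h. b \<le> h \<and> h \<le> b + A1 \<and> g (u t) - g (v t) = h * (u t - v t)" if "t \<ge> T" for t
  proof -
    obtain z where z: "min (u t) (v t) \<le> z" "z \<le> max (u t) (v t)" "g (u t) - g (v t) = g' z * (u t - v t)"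
      using mvt_any[OF gd] by blast
    have "\<bar>u t\<bar> < M + e" "\<bar>v t\<bar> < M + e" using T1 T2 that by (auto simp: T_def)
    then have "\<bar>z\<bar> \<le> M + e" using z by auto
    then show ?thesis using g'bnd[of z] gb[of z] z by (intro exI[of _ "g' z"]) auto
  qed
  obtain K0 \<gamma> where K0: "K0 > 0" and \<gamma>: "\<gamma> > 0" and Rb: "\<And>p w h. b \<le> h \<Longrightarrow> h \<le> b + A1 \<Longrightarrow>
            \<gamma> * (p^2 + w^2) \<le> c * p^2 - (K0 - 2 * h) * p * w + c * h * w^2"
    using quad_decay[OF c b A1(3) A1(2)] by blast
  define \<beta> where "\<beta> = (K0 + c^2) / 2"
  define q0 where "q0 = min (1/2) ((\<beta> - c^2/4) / (1 + \<beta>))"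
  define C where "C = 1 + c + \<beta>"
  have q0: "q0 > 0" unfolding q0_def \<beta>_def by (rule Q_bounds(1)[OF c K0])
  have Qlo: "q0 * (p^2 + w^2) \<le> p^2 + c * p * w + \<beta> * w^2" for p w
    unfolding q0_def \<beta>_def by (rule Q_bounds(2)[OF c K0])
  have Qhi: "p^2 + c * p * w + \<beta> * w^2 \<le> C * (p^2 + w^2)" for p w
    unfolding C_def \<beta>_def by (rule Q_bounds(3)[OF c K0])
  have C0: "C > 0" using Qlo[of 1 0] Qhi[of 1 0] q0 by simp
  define \<kappa> where "\<kappa> = \<gamma> / (2 * C)"
  have \<kappa>: "\<kappa> > 0" using \<gamma> C0 by (simp add: \<kappa>_def)
  have \<kappa>C: "\<kappa> * C = \<gamma> / 2" using C0 by (simp add: \<kappa>_def)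
  define P where "P = (\<lambda>t. u' t - v' t)"
  define W where "W = (\<lambda>t. u t - v t)"
  define Q where "Q = (\<lambda>t. (P t)^2 + c * P t * W t + \<beta> * (W t)^2)"
  define \<phi> where "\<phi> = (\<lambda>t. exp (\<kappa> * t) * Q t)"
  have Q0: "Q t \<ge> 0" for t
  proof -
    have "0 \<le> q0 * ((P t)^2 + (W t)^2)" using q0 by simp
    then show ?thesis using Qlo[of "P t" "W t"] unfolding Q_def by linarith
  qed
  have AEu: "AE t in lborel. t \<ge> t0 \<longrightarrow> (u' has_real_derivative (f t - c * u' t - g (u t))) (at t)"
    using solu unfolding is_solution_def by blast
  have AEv: "AE t in lborel. t \<ge> t0 \<longrightarrow> (v' has_real_derivative (f t - c * v' t - g (v t))) (at t)"
    using solv unfolding is_solution_def by blast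
  have "AE t in lborel. (t \<ge> t0 \<longrightarrow> (u' has_real_derivative (f t - c * u' t - g (u t))) (at t)) \<and>
      (t \<ge> t0 \<longrightarrow> (v' has_real_derivative (f t - c * v' t - g (v t))) (at t))"
    using AEu AEv by eventually_elim blast
  then obtain N where N: "negligible N" and Nt: "\<And>t. t \<notin> N \<Longrightarrow>
      (t \<ge> t0 \<longrightarrow> (u' has_real_derivative (f t - c * u' t - g (u t))) (at t)) \<and>
      (t \<ge> t0 \<longrightarrow> (v' has_real_derivative (f t - c * v' t - g (v t))) (at t))"
    using AE_negl[of "\<lambda>t. (t \<ge> t0 \<longrightarrow> (u' has_real_derivative (f t - c * u' t - g (u t))) (at t)) \<and>
      (t \<ge> t0 \<longrightarrow> (v' has_real_derivative (f t - c * v' t - g (v t))) (at t))"] by blast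
  have expd: "\<And>s. (exp has_real_derivative exp s) (at s)" by (rule DERIV_exp)
  have LIPphi: "LIP t0 t1 \<phi>" for t1
    unfolding \<phi>_def Q_def P_def W_def power2_eq_square
    by (intro LIP_add LIP_mult LIP_diff LIP_const LIP_id sol_LIP0[OF solu] sol_LIP1[OF solu]
        sol_LIP0[OF solv] sol_LIP1[OF solv] LIP_compose[OF _ expd continuous_on_exp[OF continuous_on_id]])
  have main: "\<phi> t1 \<le> max (\<phi> T) 0" if t1: "t1 \<ge> T" for t1
  proof (rule barrier[where S = "(N \<union> {t0}) \<inter> {T..t1}" and \<phi> = \<phi> and a = T and b = t1])
    have L: "LIP T t1 \<phi>" by (rule LIP_mono[OF LIPphi T])
    show "continuous_on {T..t1} \<phi>" using L unfolding LIP_def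
      using lipschitz_on_continuous_on by blast
    show "negligible (\<phi> ` ((N \<union> {t0}) \<inter> {T..t1}))"
      by (rule LIP_negl_image[OF L]) (use N in simp)
    fix t assume t: "t \<in> {T..<t1}" "t \<notin> (N \<union> {t0}) \<inter> {T..t1}" "0 < \<phi> t"
    then have tN: "t \<notin> N" and tt0: "t > t0" and tT: "t \<ge> T" using T by auto
    have dpu: "(u' has_real_derivative (f t - c * u' t - g (u t))) (at t)" using Nt[OF tN] tt0 by auto
    have dpv: "(v' has_real_derivative (f t - c * v' t - g (v t))) (at t)" using Nt[OF tN] tt0 by auto
    have du: "(u has_real_derivative u' t) (at t)" by (rule sol_der[OF solu tt0])
    have dv: "(v has_real_derivative v' t) (at t)" by (rule sol_der[OF solv tt0])
    define Gd where "Gd = g (u t) - g (v t)"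
    define Qd where "Qd = - c * (P t)^2 + (2 * \<beta> - c^2) * P t * W t - 2 * P t * Gd - c * W t * Gd"
    have dphi: "(\<phi> has_real_derivative (exp (\<kappa> * t) * (\<kappa> * Q t + Qd))) (at t)"
      unfolding \<phi>_def Q_def P_def W_def Qd_def Gd_def
      apply (rule derivative_eq_intros dpu dpv du dv refl)+
      apply (simp add: algebra_simps power2_eq_square)
      done
    obtain h where h: "b \<le> h" "h \<le> b + A1" "Gd = h * W t" using hb[OF tT] unfolding Gd_def W_def by blast
    have two: "2 * (x / 2) = x" for x :: real by simp
    have "2 * \<beta> - c^2 = K0" unfolding \<beta>_def two by simp
    then have "Qd = - (c * (P t)^2 - (K0 - 2 * h) * P t * W t + c * h * (W t)^2)"
      unfolding Qd_def h(3) by (simp only:) (simp add: power2_eq_square algebra_simps)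
    then have Qd: "Qd \<le> - \<gamma> * ((P t)^2 + (W t)^2)" using Rb[OF h(1) h(2), of "P t" "W t"] by simp
    have "\<kappa> * Q t \<le> \<kappa> * (C * ((P t)^2 + (W t)^2))"
      using Qhi[of "P t" "W t"] \<kappa> unfolding Q_def by (intro mult_left_mono) auto
    also have "\<dots> = \<gamma> / 2 * ((P t)^2 + (W t)^2)" using \<kappa>C by (simp add: mult.assoc[symmetric])
    finally have kQ: "\<kappa> * Q t \<le> \<gamma> / 2 * ((P t)^2 + (W t)^2)" .
    have "Q t > 0" using t(3) unfolding \<phi>_def by (simp add: zero_less_mult_iff)
    then have "(P t)^2 + (W t)^2 \<noteq> 0" unfolding Q_def by auto
    then have "(P t)^2 + (W t)^2 > 0" by (simp add: add_nonneg_eq_0_iff order_le_neq_trans)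
    then have "\<gamma> * ((P t)^2 + (W t)^2) > 0" using \<gamma> by simp
    moreover have "\<gamma> / 2 * ((P t)^2 + (W t)^2) = (\<gamma> * ((P t)^2 + (W t)^2)) / 2" by simp
    moreover have "- \<gamma> * ((P t)^2 + (W t)^2) = - (\<gamma> * ((P t)^2 + (W t)^2))" by simp
    ultimately have "\<kappa> * Q t + Qd < 0" using kQ Qd by linarith
    then have "exp (\<kappa> * t) * (\<kappa> * Q t + Qd) < 0" by (simp add: mult_pos_neg)
    then show "\<exists>D<0. (\<phi> has_real_derivative D) (at t)" using dphi by blast
  qed (use t1 in auto)
  define Z where "Z = \<phi> T"
  have Z0: "Z \<ge> 0" unfolding Z_def \<phi>_def using Q0 by simp
  define K1 where "K1 = sqrt (2 * Z / q0)"
  define \<delta> where "\<delta> = \<kappa> / 2"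
  have \<delta>: "\<delta> > 0" using \<kappa> by (simp add: \<delta>_def)
  have late: "\<bar>W t\<bar> + \<bar>P t\<bar> \<le> K1 * exp (- \<delta> * t)" if "t \<ge> T" for t
  proof -
    have "\<phi> t \<le> Z" using main[OF that] Z0 by (simp add: Z_def)
    then have "exp (\<kappa> * t) * Q t \<le> Z" by (simp add: \<phi>_def)
    then have "Q t \<le> Z * exp (- \<kappa> * t)" by (simp add: exp_minus field_simps)
    then have "q0 * ((P t)^2 + (W t)^2) \<le> Z * exp (- \<kappa> * t)" using Qlo[of "P t" "W t"] unfolding Q_def by linarith
    then have 1: "(P t)^2 + (W t)^2 \<le> Z * exp (- \<kappa> * t) / q0" using q0 by (simp add: field_simps)
    have "0 \<le> (\<bar>W t\<bar> - \<bar>P t\<bar>)^2" by simp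
    then have "(\<bar>W t\<bar> + \<bar>P t\<bar>)^2 \<le> 2 * ((P t)^2 + (W t)^2)" by (simp add: power2_eq_square algebra_simps)
    also have "\<dots> \<le> 2 * (Z * exp (- \<kappa> * t) / q0)" using 1 by simp
    also have "\<dots> = 2 * Z / q0 * exp (- \<kappa> * t)" by simp
    also have "\<dots> = (K1 * exp (- \<delta> * t))^2"
      using Z0 q0 by (simp add: K1_def \<delta>_def power_mult_distrib exp_double[symmetric] field_simps)
    finally show ?thesis by (rule power2_le_imp_le) (use Z0 q0 in \<open>simp add: K1_def\<close>)
  qed
  define K where "K = K1 + 4 * (max Bu Bv) * exp (\<delta> * T) + 1"
  have Bpos: "max Bu Bv \<ge> 0" using Bu by (meson abs_ge_zero max.coboundedI1 order_trans order_refl)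
  have K1nn: "0 \<le> K1" unfolding K1_def using Z0 q0 by simp
  have Bnn: "0 \<le> 4 * max Bu Bv * exp (\<delta> * T)" using Bpos by simp
  have K: "K > 0" unfolding K_def using K1nn Bnn by linarith
  have "\<bar>u t - v t\<bar> + \<bar>u' t - v' t\<bar> \<le> K * exp (- \<delta> * t)" if "t \<ge> t0" for t
  proof (cases "t \<ge> T")
    case True
    have "K1 \<le> K" unfolding K_def using Bnn by linarith
    then have "K1 * exp (- \<delta> * t) \<le> K * exp (- \<delta> * t)" by (simp add: mult_right_mono)
    moreover have "\<bar>W t\<bar> + \<bar>P t\<bar> \<le> K1 * exp (- \<delta> * t)" by (rule late[OF True])
    ultimately show ?thesis unfolding W_def P_def by linarith
  next
    case False
    have "\<bar>u t - v t\<bar> + \<bar>u' t - v' t\<bar> \<le> (\<bar>u t\<bar> + \<bar>v t\<bar>) + (\<bar>u' t\<bar> + \<bar>v' t\<bar>)" by linarith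
    also have "\<dots> \<le> 4 * max Bu Bv"
    proof -
      have "\<bar>u t\<bar> \<le> Bu" "\<bar>u' t\<bar> \<le> Bu" "\<bar>v t\<bar> \<le> Bv" "\<bar>v' t\<bar> \<le> Bv" using Bu Bv that by auto
      moreover have "Bu \<le> max Bu Bv" "Bv \<le> max Bu Bv" by simp_all
      ultimately show ?thesis by linarith
    qed
    also have "\<dots> = 4 * max Bu Bv * exp (\<delta> * T) * exp (- \<delta> * T)" by (simp add: exp_minus)
    also have "\<dots> \<le> 4 * max Bu Bv * exp (\<delta> * T) * exp (- \<delta> * t)"
      using False \<delta> Bpos by (intro mult_left_mono) auto
    also have "\<dots> \<le> K * exp (- \<delta> * t)"
      by (rule mult_right_mono) (use K1nn in \<open>auto simp: K_def\<close>)
    finally show ?thesis .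
  qed
  then show ?thesis using \<delta> K by blast
qed


end
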